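(* Let $r$ be an ELP rule of the form $A \leftarrow B, \neg C, \mathbf{not}\, D, \mathbf{not}\,\neg E, \neg\mathbf{not}\, F, \neg\mathbf{not}\,\neg G$, where $A,B,C,D,E,F,G$ are finite sets of atoms. Then $r$ is tautological if and only if at least one of the following holds: (a) $A \cap B \neq \emptyset$; (b) $B \cap (C \cup G) \neq \emptyset$; (c) $C \cap F \neq \emptyset$; (d) $D \cap F \neq \emptyset$; (e) $E \cap G \neq \emptyset$; (f) $F\cap G\neq\emptyset$.
   Context: Notation for the rule: the head is the disjunction of the atoms in $A$; the body is the conjunction of the atoms in $B$, the literals $\neg c$ ($c\in C$), the epistemic literals $\mathbf{not}\,d$ ($d\in D$), $\mathbf{not}\,\neg e$ ($e\in E$), and the negated epistemic literals $\neg\mathbf{not}\,f$ ($f\in F$), $\neg\mathbf{not}\,\neg g$ ($g\in G$). Definitions: a literal over atoms $\mathcal{A}$ is $a$ or $\neg a$; interpretations $I\subseteq\mathcal{A}$, $I\models a$ iff $a\in I$, $I\models\neg\ell$ iff $I\not\models\ell$. A plain logic program $(\mathcal{A},\mathcal{R})$ has rules $a_1\vee\cdots\vee a_l\leftarrow a_{l+1},\ldots,a_m,\neg\ell_1,\ldots,\neg\ell_n$; $M\models r$ iff body true implies some head atom in $M$. GL-reduct $\Pi^I$ keeps $H(r)\leftarrow B^+(r)$ (positive body atoms) for rules all of whose negated body elements $\neg\ell$ are true in $I$ ($\neg\neg\neg a$ treated as $\neg a$); answer sets are models $M$ with no $M'\subset M$ modelling $\Pi^M$. An ELP is $(\mathcal{A},\mathcal{E},\mathcal{R})$,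 $\mathcal{E}$ a set of epistemic literals $\mathbf{not}\,\ell$, rules $a_1\vee\cdots\vee a_k\leftarrow\ell_1,\ldots,\ell_m,\xi_1,\ldots,\xi_j,\neg\xi_{j+1},\ldots,\neg\xi_n$ with $\xi_i\in\mathcal{E}$. A guess $\Phi\subseteq\mathcal{E}$; $\mathcal{I}$ is $\Phi$-compatible iff nonempty, each $\mathbf{not}\,\ell\in\Phi$ is falsified ($I\not\models\ell$) by some $I\in\mathcal{I}$, and each $\mathbf{not}\,\ell\in\mathcal{E}\setminus\Phi$ has $\ell$ true in all $I\in\mathcal{I}$. Epistemic reduct $\Pi^\Phi$: replace $\mathbf{not}\,\ell\in\Phi$ by $\top$ and remaining $\mathbf{not}$ by $\neg$. A candidate world view is $AS(\Pi^\Phi)$ when $\Phi$-compatible; a world view is a candidate world view with subset-maximal associated guess. ELPs $\Pi_1,\Pi_2$ are strongly equivalent iff for every ELP $\Pi$, $\Pi_1\cup\Pi$ and $\Pi_2\cup\Pi$ (componentwise union) have the same world views. An ELP rule $r$ over $\mathcal{A}$ and $\mathcal{E}$ (containing the atoms and epistemic literals of $r$) is tautological iff $(\mathcal{A},\mathcal{E},\{r\})$ is strongly equivalent to $(\mathcal{A},\mathcal{E},\emptyset)$. *)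

theory Defs
  imports Main
begin

text \<open>A literal over atoms is an atom a (Pos a) or its negation (Neg a).
  An epistemic literal "not l" is represented by its literal l.\<close>

datatype 'a lit = Pos 'a | Neg 'a

fun lsat :: "'a set \<Rightarrow> 'a lit \<Rightarrow> bool" where
  "lsat I (Pos a) = (a \<in> I)"
| "lsat I (Neg a) = (a \<notin> I)"

fun negl :: "'a lit \<Rightarrow> 'a lit" where
  "negl (Pos a) = Neg a"
| "negl (Neg a) = Pos a"

fun lit_atom :: "'a lit \<Rightarrow> 'a" where
  "lit_atom (Pos a) = a"
| "lit_atom (Neg a) = a"

text \<open>Plain rule: head atoms; positive body atoms; pneg = the set of literals l
  such that the body contains the negated element (neg l).  Here neg (Neg a),
  i.e. double negation of a, is allowed; triple negation of a is identified with neg a,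
  i.e. with the entry Pos a.\<close>

datatype 'a prule = PRule (phead: "'a set") (ppos: "'a set") (pneg: "'a lit set")

definition pbody_true :: "'a set \<Rightarrow> 'a prule \<Rightarrow> bool" where
  "pbody_true M r \<longleftrightarrow> ppos r \<subseteq> M \<and> (\<forall>l\<in>pneg r. \<not> lsat M l)"

definition psat :: "'a set \<Rightarrow> 'a prule \<Rightarrow> bool" where
  "psat M r \<longleftrightarrow> (pbody_true M r \<longrightarrow> phead r \<inter> M \<noteq> {})"

definition pmodel :: "'a set \<Rightarrow> 'a prule set \<Rightarrow> bool" where
  "pmodel M P \<longleftrightarrow> (\<forall>r\<in>P. psat M r)"

definition gl_reduct :: "'a prule set \<Rightarrow> 'a set \<Rightarrow> 'a prule set" where
  "gl_reduct P I = {PRule (phead r) (ppos r) {} | r. r \<in> P \<and> (\<forall>l\<in>pneg r. \<not> lsat I l)}"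

definition answer_sets :: "'a set \<Rightarrow> 'a prule set \<Rightarrow> 'a set set" where
  "answer_sets At P = {M. M \<subseteq> At \<and> pmodel M (gl_reduct P M) \<and>
       \<not> (\<exists>M'. M' \<subset> M \<and> pmodel M' (gl_reduct P M))}"

text \<open>ELP rule  H <- Bp, neg Bn, E+, neg E-  where E+ / E- are sets of epistemic
  literals (not l), each represented by the literal l.\<close>

datatype 'a erule = ERule (ehead: "'a set") (ebpos: "'a set") (ebneg: "'a set")
                          (eepos: "'a lit set") (eeneg: "'a lit set")

definition erule_atoms :: "'a erule \<Rightarrow> 'a set" where
  "erule_atoms r = ehead r \<union> ebpos r \<union> ebneg r \<union> lit_atom ` (eepos r \<union> eeneg r)"

definition erule_elits :: "'a erule \<Rightarrow> 'a lit set" where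
  "erule_elits r = eepos r \<union> eeneg r"

type_synonym 'a elp = "'a set \<times> 'a lit set \<times> 'a erule set"

definition is_elp :: "'a elp \<Rightarrow> bool" where
  "is_elp P \<longleftrightarrow> (case P of (At, Ep, R) \<Rightarrow>
     finite At \<and> finite Ep \<and> finite R \<and>
     (\<forall>r\<in>R. erule_atoms r \<subseteq> At \<and> erule_elits r \<subseteq> Ep))"

definition elp_union :: "'a elp \<Rightarrow> 'a elp \<Rightarrow> 'a elp" where
  "elp_union P Q = (case P of (A1, E1, R1) \<Rightarrow> case Q of (A2, E2, R2) \<Rightarrow>
      (A1 \<union> A2, E1 \<union> E2, R1 \<union> R2))"

text \<open>Epistemic reduct: not l in Phi becomes true (dropped), other not l becomes neg l;
  neg not l with not l in Phi makes the body false (rule dropped); otherwise it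
  becomes neg neg l, i.e. pneg entry (negl l).\<close>
definition epi_reduct :: "'a erule set \<Rightarrow> 'a lit set \<Rightarrow> 'a prule set" where
  "epi_reduct R Phi = {PRule (ehead r) (ebpos r)
        (Pos ` ebneg r \<union> (eepos r - Phi) \<union> negl ` eeneg r) | r. r \<in> R \<and> eeneg r \<inter> Phi = {}}"

definition compatible :: "'a lit set \<Rightarrow> 'a lit set \<Rightarrow> 'a set set \<Rightarrow> bool" where
  "compatible Ep Phi W \<longleftrightarrow> W \<noteq> {} \<and>
     (\<forall>l\<in>Phi. \<exists>I\<in>W. \<not> lsat I l) \<and>
     (\<forall>l\<in>Ep - Phi. \<forall>I\<in>W. lsat I l)"

definition candidate_wv :: "'a elp \<Rightarrow> 'a lit set \<Rightarrow> 'a set set \<Rightarrow> bool" where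
  "candidate_wv P Phi W \<longleftrightarrow> (case P of (At, Ep, R) \<Rightarrow>
     Phi \<subseteq> Ep \<and> W = answer_sets At (epi_reduct R Phi) \<and> compatible Ep Phi W)"

definition world_views :: "'a elp \<Rightarrow> 'a set set set" where
  "world_views P = {W. \<exists>Phi. candidate_wv P Phi W \<and>
      \<not> (\<exists>Phi' W'. candidate_wv P Phi' W' \<and> Phi \<subset> Phi')}"

definition strongly_equiv :: "'a elp \<Rightarrow> 'a elp \<Rightarrow> bool" where
  "strongly_equiv P1 P2 \<longleftrightarrow>
     (\<forall>Q. is_elp Q \<longrightarrow> world_views (elp_union P1 Q) = world_views (elp_union P2 Q))"

definition tautological :: "'a set \<Rightarrow> 'a lit set \<Rightarrow> 'a erule \<Rightarrow> bool" where
  "tautological At Ep r \<longleftrightarrow> strongly_equiv (At, Ep, {r}) (At, Ep, {})"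

definition mk_rule :: "'a set \<Rightarrow> 'a set \<Rightarrow> 'a set \<Rightarrow> 'a set \<Rightarrow> 'a set \<Rightarrow> 'a set \<Rightarrow> 'a set \<Rightarrow> 'a erule" where
  "mk_rule A B C D E F G = ERule A B C (Pos ` D \<union> Neg ` E) (Pos ` F \<union> Neg ` G)"

end

theory Submission
  imports Defs
begin


lemma pmodel_gl:
  "pmodel M' (gl_reduct P M) \<longleftrightarrow>
   (\<forall>r\<in>P. (\<forall>l\<in>pneg r. \<not> lsat M l) \<longrightarrow> ppos r \<subseteq> M' \<longrightarrow> phead r \<inter> M' \<noteq> {})"
proof -
  have "pmodel M' (gl_reduct P M) \<longleftrightarrow>
   (\<forall>r\<in>P. (\<forall>l\<in>pneg r. \<not> lsat M l) \<longrightarrow> psat M' (PRule (phead r) (ppos r) {}))"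
    unfolding pmodel_def gl_reduct_def by auto
  then show ?thesis by (simp add: psat_def pbody_true_def)
qed

lemma as_irrel:
  assumes "\<forall>M M'. (\<forall>l\<in>pneg r. \<not> lsat M l) \<longrightarrow> M' \<subseteq> M \<longrightarrow> ppos r \<subseteq> M' \<longrightarrow> phead r \<inter> M' \<noteq> {}"
  shows "answer_sets At (insert r P) = answer_sets At P"
proof -
  have eq: "\<And>M M'. M' \<subseteq> M \<Longrightarrow> pmodel M' (gl_reduct (insert r P) M) = pmodel M' (gl_reduct P M)"
    using assms by (auto simp: pmodel_gl)
  show ?thesis unfolding answer_sets_def using eq
    by (smt (verit, best) Collect_cong order_refl psubset_imp_subset)
qed

lemma epi_reduct_insert:
  "epi_reduct (insert r R) Phi = (if eeneg r \<inter> Phi = {} then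
     insert (PRule (ehead r) (ebpos r) (Pos ` ebneg r \<union> (eepos r - Phi) \<union> negl ` eeneg r)) (epi_reduct R Phi)
     else epi_reduct R Phi)"
  by (auto simp: epi_reduct_def)

definition pl_red :: "'a erule set \<Rightarrow> 'a prule set" where
  "pl_red R = (\<lambda>r. PRule (ehead r) (ebpos r) (Pos ` ebneg r)) ` R"

lemma epi_reduct_plain:
  "\<forall>r\<in>R. eepos r = {} \<and> eeneg r = {} \<Longrightarrow> epi_reduct R Phi = pl_red R"
  by (auto simp: epi_reduct_def pl_red_def)

lemma compat_unique:
  "compatible Ep Phi W \<Longrightarrow> Phi \<subseteq> Ep \<Longrightarrow> Phi = {l\<in>Ep. \<exists>I\<in>W. \<not> lsat I l}"
  unfolding compatible_def by blast

lemma compat_Phi: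
  "W \<noteq> {} \<Longrightarrow> compatible Ep {l\<in>Ep. \<exists>I\<in>W. \<not> lsat I l} W"
  unfolding compatible_def by blast

lemma wv_plain:
  assumes "\<forall>r\<in>R. eepos r = {} \<and> eeneg r = {}" "answer_sets At (pl_red R) = W" "W \<noteq> {}"
  shows "W \<in> world_views (At, Ep, R)"
proof -
  let ?Phi = "{l\<in>Ep. \<exists>I\<in>W. \<not> lsat I l}"
  have c: "candidate_wv (At, Ep, R) ?Phi W"
    using assms compat_Phi[OF assms(3)] by (auto simp: candidate_wv_def epi_reduct_plain)
  have "\<not> (\<exists>Phi' W'. candidate_wv (At, Ep, R) Phi' W' \<and> ?Phi \<subset> Phi')"
  proof
    assume "\<exists>Phi' W'. candidate_wv (At, Ep, R) Phi' W' \<and> ?Phi \<subset> Phi'"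
    then obtain Phi' W' where "candidate_wv (At, Ep, R) Phi' W'" "?Phi \<subset> Phi'" by blast
    then have "Phi' \<subseteq> Ep" "W' = W" "compatible Ep Phi' W'"
      using assms by (auto simp: candidate_wv_def epi_reduct_plain)
    then have "Phi' = ?Phi" using compat_unique by blast
    with \<open>?Phi \<subset> Phi'\<close> show False by simp
  qed
  with c show ?thesis unfolding world_views_def by blast
qed

lemma wv_eq:
  assumes "W \<in> world_views (At, Ep, R)"
  shows "W = answer_sets At (epi_reduct R {l\<in>Ep. \<exists>I\<in>W. \<not> lsat I l})"
proof -
  obtain Phi where "candidate_wv (At, Ep, R) Phi W" using assms unfolding world_views_def by blast
  then have "Phi \<subseteq> Ep" "W = answer_sets At (epi_reduct R Phi)" "compatible Ep Phi W"
    by (auto simp: candidate_wv_def)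
  then have "Phi = {l\<in>Ep. \<exists>I\<in>W. \<not> lsat I l}" using compat_unique by blast
  then show ?thesis using \<open>W = answer_sets At (epi_reduct R Phi)\<close> by simp
qed



lemma dir1:
  assumes cond: "A \<inter> B \<noteq> {} \<or> B \<inter> (C \<union> G) \<noteq> {} \<or> C \<inter> F \<noteq> {} \<or>
            D \<inter> F \<noteq> {} \<or> E \<inter> G \<noteq> {} \<or> F \<inter> G \<noteq> {}"
  shows "tautological At Ep (mk_rule A B C D E F G)"
proof -
  let ?r = "mk_rule A B C D E F G"
  have key: "answer_sets X (epi_reduct (insert ?r R) Phi) = answer_sets X (epi_reduct R Phi)" for X R Phi
  proof (cases "eeneg ?r \<inter> Phi = {}")
    case False thus ?thesis by (simp add: epi_reduct_insert)
  next
    case True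
    let ?pr = "PRule A B (Pos ` C \<union> ((Pos ` D \<union> Neg ` E) - Phi) \<union> negl ` (Pos ` F \<union> Neg ` G))"
    have nF: "Pos x \<notin> Phi" if "x \<in> F" for x using True that by (auto simp: mk_rule_def)
    have nG: "Neg x \<notin> Phi" if "x \<in> G" for x using True that by (auto simp: mk_rule_def)
    have pn: "pneg ?pr = Pos ` C \<union> ((Pos ` D \<union> Neg ` E) - Phi) \<union> (Neg ` F \<union> Pos ` G)"
      by (simp add: image_Un image_image)
    have "\<forall>M M'. (\<forall>l\<in>pneg ?pr. \<not> lsat M l) \<longrightarrow> M' \<subseteq> M \<longrightarrow> ppos ?pr \<subseteq> M' \<longrightarrow> phead ?pr \<inter> M' \<noteq> {}"
    proof (intro allI impI)
      fix M M' assume h: "\<forall>l\<in>pneg ?pr. \<not> lsat M l" "M' \<subseteq> M" "ppos ?pr \<subseteq> M'"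
      have both: False if "Pos x \<in> pneg ?pr" "Neg x \<in> pneg ?pr" for x
        using h(1) that by (metis lsat.simps(1) lsat.simps(2))
      from cond show "phead ?pr \<inter> M' \<noteq> {}"
      proof (elim disjE)
        assume "A \<inter> B \<noteq> {}" thus ?thesis using h by auto
      next
        assume "B \<inter> (C \<union> G) \<noteq> {}" then obtain b where b: "b \<in> B" "b \<in> C \<or> b \<in> G" by auto
        then have "Pos b \<in> pneg ?pr" unfolding pn by blast
        then have "b \<notin> M" using h by fastforce
        thus ?thesis using h b by auto
      next
        assume "C \<inter> F \<noteq> {}" then obtain x where "x\<in>C" "x\<in>F" by auto
        then have "Pos x \<in> pneg ?pr" "Neg x \<in> pneg ?pr" unfolding pn by blast+
        thus ?thesis using both by blast
      next
        assume "D \<inter> F \<noteq> {}" then obtain x where "x\<in>D" "x\<in>F" by auto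
        then have "Pos x \<in> pneg ?pr" "Neg x \<in> pneg ?pr" using nF unfolding pn by blast+
        thus ?thesis using both by blast
      next
        assume "E \<inter> G \<noteq> {}" then obtain x where "x\<in>E" "x\<in>G" by auto
        then have "Pos x \<in> pneg ?pr" "Neg x \<in> pneg ?pr" using nG unfolding pn by blast+
        thus ?thesis using both by blast
      next
        assume "F \<inter> G \<noteq> {}" then obtain x where "x\<in>F" "x\<in>G" by auto
        then have "Pos x \<in> pneg ?pr" "Neg x \<in> pneg ?pr" unfolding pn by blast+
        thus ?thesis using both by blast
      qed
    qed
    then show ?thesis using True by (simp add: epi_reduct_insert as_irrel mk_rule_def)
  qed
  show ?thesis unfolding tautological_def strongly_equiv_def
  proof (intro allI impI)
    fix Q :: "'a elp" assume "is_elp Q"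
    obtain AQ EQ RQ where Q: "Q = (AQ, EQ, RQ)" by (cases Q) auto
    have "candidate_wv (At \<union> AQ, Ep \<union> EQ, {?r} \<union> RQ) = candidate_wv (At \<union> AQ, Ep \<union> EQ, {} \<union> RQ)"
      by (intro ext) (simp add: candidate_wv_def key)
    thus "world_views (elp_union (At, Ep, {?r}) Q) = world_views (elp_union (At, Ep, {}) Q)"
      by (simp add: Q elp_union_def world_views_def)
  qed
qed

lemma reduct_r:
  assumes el: "Pos ` D \<union> Neg ` E \<subseteq> Ep" and W1: "\<forall>I\<in>W. F \<subseteq> I \<and> G \<inter> I = {}"
    and W2: "\<forall>d\<in>D. \<exists>I\<in>W. d \<notin> I" and W3: "\<forall>e\<in>E. \<exists>I\<in>W. e \<in> I"
  shows "epi_reduct (insert (mk_rule A B C D E F G) R) {l\<in>Ep. \<exists>I\<in>W. \<not> lsat I l}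
     = insert (PRule A B (Pos ` C \<union> Neg ` F \<union> Pos ` G)) (epi_reduct R {l\<in>Ep. \<exists>I\<in>W. \<not> lsat I l})"
proof -
  let ?Phi = "{l\<in>Ep. \<exists>I\<in>W. \<not> lsat I l}"
  have 1: "eeneg (mk_rule A B C D E F G) \<inter> ?Phi = {}" using W1 by (fastforce simp: mk_rule_def)
  have 2: "eepos (mk_rule A B C D E F G) - ?Phi = {}" using el W2 W3 by (fastforce simp: mk_rule_def)
  have 3: "negl ` (Pos ` F \<union> Neg ` G) = Neg ` F \<union> Pos ` G" by (simp add: image_Un image_image)
  have eq: "Pos ` C \<union> (Pos ` D \<union> Neg ` E - ?Phi) \<union> negl ` (Pos ` F \<union> Neg ` G) = Pos ` C \<union> Neg ` F \<union> Pos ` G"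
    using 2 3 by (auto simp: mk_rule_def)
  have "epi_reduct (insert (mk_rule A B C D E F G) R) ?Phi = insert (PRule (ehead (mk_rule A B C D E F G)) (ebpos (mk_rule A B C D E F G))
     (Pos ` ebneg (mk_rule A B C D E F G) \<union> (eepos (mk_rule A B C D E F G) - ?Phi) \<union> negl ` eeneg (mk_rule A B C D E F G))) (epi_reduct R ?Phi)"
    using 1 by (simp add: epi_reduct_insert)
  also have "\<dots> = insert (PRule A B (Pos ` C \<union> Neg ` F \<union> Pos ` G)) (epi_reduct R ?Phi)"
    by (simp only: mk_rule_def erule.sel eq)
  finally show ?thesis .
qed



lemma ball_img[simp]: "(\<forall>x\<in>f ` A. P x) = (\<forall>y\<in>A. P (f y))" by auto

lemma pmodel_gl_insert:
  "pmodel M' (gl_reduct (insert r P) M) \<longleftrightarrow>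
   ((\<forall>l\<in>pneg r. \<not> lsat M l) \<longrightarrow> ppos r \<subseteq> M' \<longrightarrow> phead r \<inter> M' \<noteq> {}) \<and> pmodel M' (gl_reduct P M)"
  by (simp add: pmodel_gl)

lemma rprime_cond:
  "(\<forall>l\<in>Pos ` C \<union> Neg ` F \<union> Pos ` G. \<not> lsat M l) \<longleftrightarrow>
    C \<inter> M = {} \<and> F \<subseteq> M \<and> G \<inter> M = {}"
  by (simp add: ball_Un) blast

lemma as1:
  assumes "p0 \<noteq> p1" "p0 \<noteq> p2" "p1 \<noteq> p2" "p0 \<notin> S1" "p0 \<notin> S2" "p1 \<notin> S0" "p1 \<notin> S2" "p2 \<notin> S0" "p2 \<notin> S1"
  and "insert p0 S0 \<subseteq> X" "insert p1 S1 \<subseteq> X" "insert p2 S2 \<subseteq> X"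
  shows "answer_sets X (pl_red (insert (ERule {p0,p1,p2} {} {} {} {}) ((\<lambda>x. ERule {x} {p0} {} {} {}) ` S0 \<union>
     (\<lambda>x. ERule {x} {p1} {} {} {}) ` S1 \<union> (\<lambda>x. ERule {x} {p2} {} {} {}) ` S2)))
     = {insert p0 S0, insert p1 S1, insert p2 S2}" (is "answer_sets X ?P = ?W")
proof -
  define md where "md M' = ((p0\<in>M' \<or> p1\<in>M' \<or> p2\<in>M') \<and> (p0\<in>M' \<longrightarrow> S0 \<subseteq> M') \<and>
     (p1\<in>M' \<longrightarrow> S1 \<subseteq> M') \<and> (p2\<in>M' \<longrightarrow> S2 \<subseteq> M'))" for M'
  have ch: "pmodel M' (gl_reduct ?P M) = md M'" for M M' by (simp add: pmodel_gl pl_red_def md_def ball_Un) blast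
  have m: "md (insert p0 S0)" "md (insert p1 S1)" "md (insert p2 S2)" using assms by (auto simp: md_def)
  have mn0: "M' = insert p0 S0" if "M' \<subseteq> insert p0 S0" "md M'" for M'
    using assms that unfolding md_def by blast
  have mn1: "M' = insert p1 S1" if "M' \<subseteq> insert p1 S1" "md M'" for M'
    using assms that unfolding md_def by blast
  have mn2: "M' = insert p2 S2" if "M' \<subseteq> insert p2 S2" "md M'" for M'
    using assms that unfolding md_def by blast
  show ?thesis unfolding answer_sets_def ch
  proof (intro equalityI subsetI)
    fix M assume "M \<in> {M. M \<subseteq> X \<and> md M \<and> \<not> (\<exists>M'. M' \<subset> M \<and> md M')}"
    then have h: "md M" "\<not> (\<exists>M'. M' \<subset> M \<and> md M')" by auto
    from h(1) consider "p0\<in>M" | "p1\<in>M" | "p2\<in>M" by (auto simp: md_def)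
    then show "M \<in> ?W"
    proof cases
      case 1 then have s: "insert p0 S0 \<subseteq> M" using h(1) by (auto simp: md_def)
      have "\<not> insert p0 S0 \<subset> M" using h(2) m(1) by blast
      then show ?thesis using s by blast
    next
      case 2 then have s: "insert p1 S1 \<subseteq> M" using h(1) by (auto simp: md_def)
      have "\<not> insert p1 S1 \<subset> M" using h(2) m(2) by blast
      then show ?thesis using s by blast
    next
      case 3 then have s: "insert p2 S2 \<subseteq> M" using h(1) by (auto simp: md_def)
      have "\<not> insert p2 S2 \<subset> M" using h(2) m(3) by blast
      then show ?thesis using s by blast
    qed
  next
    fix M assume "M \<in> ?W"
    have g0: "\<not>(\<exists>M'. M' \<subset> insert p0 S0 \<and> md M')" using mn0 by (auto simp: psubset_eq)
    have g1: "\<not>(\<exists>M'. M' \<subset> insert p1 S1 \<and> md M')" using mn1 by (auto simp: psubset_eq)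
    have g2: "\<not>(\<exists>M'. M' \<subset> insert p2 S2 \<and> md M')" using mn2 by (auto simp: psubset_eq)
    from \<open>M \<in> ?W\<close> have "M = insert p0 S0 \<or> M = insert p1 S1 \<or> M = insert p2 S2" by simp
    then show "M \<in> {M. M \<subseteq> X \<and> md M \<and> \<not> (\<exists>M'. M' \<subset> M \<and> md M')}"
      using m g0 g1 g2 assms(10-12) by (elim disjE) simp_all
  qed
qed

definition prog2 where
  "prog2 p0 p1 p2 T0 S1 S2 K f0 = insert (ERule {p0,p1,p2} {} {} {} {}) ((\<lambda>x. ERule {x} {p0} {} {} {}) ` T0 \<union>
     (\<lambda>x. ERule {x} {p1} {} {} {}) ` S1 \<union> (\<lambda>x. ERule {x} {p2} {} {} {}) ` S2 \<union>
     (\<lambda>x. ERule {x} {f0} {} {} {}) ` K \<union> (\<lambda>x. ERule {f0} {x} {} {} {}) ` K \<union> {ERule {} {p0} {f0} {} {}})"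

definition md2 where
  "md2 p0 p1 p2 T0 S1 S2 K f0 M M' = ((p0\<in>M' \<or> p1\<in>M' \<or> p2\<in>M') \<and> (p0\<in>M' \<longrightarrow> T0 \<subseteq> M') \<and>
     (p1\<in>M' \<longrightarrow> S1 \<subseteq> M') \<and> (p2\<in>M' \<longrightarrow> S2 \<subseteq> M') \<and> (f0 \<in> M' \<longrightarrow> K \<subseteq> M') \<and>
     (K \<inter> M' \<noteq> {} \<longrightarrow> f0 \<in> M') \<and> (f0 \<notin> M \<longrightarrow> p0 \<notin> M'))"

lemma ch2: "pmodel M' (gl_reduct (pl_red (prog2 p0 p1 p2 T0 S1 S2 K f0)) M) = md2 p0 p1 p2 T0 S1 S2 K f0 M M'"
  by (simp add: pmodel_gl pl_red_def md2_def prog2_def ball_Un) blast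

lemma as2:
  assumes "p0 \<noteq> p1" "p0 \<noteq> p2" "p1 \<noteq> p2" "p0 \<notin> S1" "p0 \<notin> S2" "p1 \<notin> T0" "p1 \<notin> S2" "p2 \<notin> T0" "p2 \<notin> S1"
   "f0 \<in> K" "K \<subseteq> S1" "K \<subseteq> S2" "K \<inter> T0 = {}" "p0 \<notin> K"
   "insert p1 S1 \<subseteq> X" "insert p2 S2 \<subseteq> X"
  shows "answer_sets X (pl_red (prog2 p0 p1 p2 T0 S1 S2 K f0)) = {insert p1 S1, insert p2 S2}" (is "_ = ?W")
proof -
  let ?md = "md2 p0 p1 p2 T0 S1 S2 K f0"
  have m1: "?md (insert p1 S1) (insert p1 S1)" using assms by (auto simp: md2_def)
  have m2: "?md (insert p2 S2) (insert p2 S2)" using assms by (auto simp: md2_def)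
  have mn1: "M' = insert p1 S1" if "M' \<subseteq> insert p1 S1" "?md (insert p1 S1) M'" for M'
  proof -
    have "p0 \<notin> M'" "p2 \<notin> M'" using that(1) assms(1-5,9) by auto
    then have "p1 \<in> M'" using that(2) unfolding md2_def by blast
    then have "S1 \<subseteq> M'" using that(2) unfolding md2_def by blast
    then show ?thesis using that(1) \<open>p1 \<in> M'\<close> by blast
  qed
  have mn2: "M' = insert p2 S2" if "M' \<subseteq> insert p2 S2" "?md (insert p2 S2) M'" for M'
  proof -
    have "p0 \<notin> M'" "p1 \<notin> M'" using that(1) assms(1-5,7) by auto
    then have "p2 \<in> M'" using that(2) unfolding md2_def by blast
    then have "S2 \<subseteq> M'" using that(2) unfolding md2_def by blast
    then show ?thesis using that(1) \<open>p2 \<in> M'\<close> by blast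
  qed
  show ?thesis unfolding answer_sets_def ch2
  proof (intro equalityI subsetI)
    fix M assume "M \<in> {M. M \<subseteq> X \<and> ?md M M \<and> \<not> (\<exists>M'. M' \<subset> M \<and> ?md M M')}"
    then have h: "?md M M" "\<not> (\<exists>M'. M' \<subset> M \<and> ?md M M')" by auto
    from h(1) consider "p0\<in>M" | "p1\<in>M" | "p2\<in>M" by (auto simp: md2_def)
    then show "M \<in> ?W"
    proof cases
      case 1
      then have f0: "f0 \<in> M" using h(1) by (auto simp: md2_def)
      have s: "insert p0 T0 \<subseteq> M" using h(1) 1 by (auto simp: md2_def)
      have "?md M (insert p0 T0)" using assms f0 by (auto simp: md2_def)
      moreover have "insert p0 T0 \<noteq> M" using f0 assms by auto
      ultimately show ?thesis using h(2) s by blast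
    next
      case 2 then have s: "insert p1 S1 \<subseteq> M" using h(1) by (auto simp: md2_def)
      have "?md M (insert p1 S1)" using assms by (auto simp: md2_def)
      then have "\<not> insert p1 S1 \<subset> M" using h(2) by blast
      then show ?thesis using s by blast
    next
      case 3 then have s: "insert p2 S2 \<subseteq> M" using h(1) by (auto simp: md2_def)
      have "?md M (insert p2 S2)" using assms by (auto simp: md2_def)
      then have "\<not> insert p2 S2 \<subset> M" using h(2) by blast
      then show ?thesis using s by blast
    qed
  next
    fix M assume "M \<in> ?W"
    have g1: "\<not>(\<exists>M'. M' \<subset> insert p1 S1 \<and> ?md (insert p1 S1) M')" using mn1 by (auto simp: psubset_eq)
    have g2: "\<not>(\<exists>M'. M' \<subset> insert p2 S2 \<and> ?md (insert p2 S2) M')" using mn2 by (auto simp: psubset_eq)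
    from \<open>M \<in> ?W\<close> have "M = insert p1 S1 \<or> M = insert p2 S2" by simp
    then show "M \<in> {M. M \<subseteq> X \<and> ?md M M \<and> \<not> (\<exists>M'. M' \<subset> M \<and> ?md M M')}"
      using m1 m2 g1 g2 assms(15,16) by (elim disjE) simp_all
  qed
qed

lemma m0_as2:
  assumes "p0 \<noteq> p1" "p0 \<noteq> p2" "p1 \<notin> T0 \<union> K" "p2 \<notin> T0 \<union> K"
   "f0 \<in> K" "B \<subseteq> T0" "A \<inter> insert p0 T0 = {}" "K \<subseteq> A"
   "C \<inter> insert p0 (T0 \<union> K) = {}" "F \<subseteq> insert p0 (T0 \<union> K)" "G \<inter> insert p0 (T0 \<union> K) = {}"
   "insert p0 (T0 \<union> K) \<subseteq> X"
  shows "insert p0 (T0 \<union> K) \<in> answer_sets X (insert (PRule A B (Pos ` C \<union> Neg ` F \<union> Pos ` G)) (pl_red (prog2 p0 p1 p2 T0 S1 S2 K f0)))"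
proof -
  let ?md = "md2 p0 p1 p2 T0 S1 S2 K f0"
  let ?M0 = "insert p0 (T0 \<union> K)"
  have ch: "pmodel M' (gl_reduct (insert (PRule A B (Pos ` C \<union> Neg ` F \<union> Pos ` G)) (pl_red (prog2 p0 p1 p2 T0 S1 S2 K f0))) M)
     = ((C \<inter> M = {} \<and> F \<subseteq> M \<and> G \<inter> M = {} \<longrightarrow> B \<subseteq> M' \<longrightarrow> A \<inter> M' \<noteq> {}) \<and> ?md M M')" for M M'
    by (simp only: pmodel_gl_insert ch2 prule.sel rprime_cond)
  have cond: "C \<inter> ?M0 = {} \<and> F \<subseteq> ?M0 \<and> G \<inter> ?M0 = {}" using assms by blast
  have mod: "?md ?M0 ?M0" using assms by (auto simp: md2_def)
  have rr: "A \<inter> ?M0 \<noteq> {}" using assms by blast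
  have mn: "M' = ?M0" if "M' \<subseteq> ?M0" "?md ?M0 M'" "B \<subseteq> M' \<longrightarrow> A \<inter> M' \<noteq> {}" for M'
  proof -
    note t = that
    have "p0 \<in> M'" using t(1,2) assms(1-4) unfolding md2_def by blast
    then have "T0 \<subseteq> M'" using t(2) unfolding md2_def by blast
    then obtain a where a: "a \<in> A" "a \<in> M'" using t(3) assms(6) by blast
    then have "a \<in> K" using t(1) assms(7) by blast
    then have "f0 \<in> M'" using t(2) a unfolding md2_def by blast
    then have "K \<subseteq> M'" using t(2) unfolding md2_def by blast
    then show ?thesis using t(1) \<open>p0 \<in> M'\<close> \<open>T0 \<subseteq> M'\<close> by blast
  qed
  show ?thesis unfolding answer_sets_def ch
    using cond mod rr mn assms(12) by (auto simp: psubset_eq)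
qed



lemma m0_not_as:
  assumes "C \<inter> M0 = {}" "F \<subseteq> M0" "G \<inter> M0 = {}" "B \<subseteq> M0" "A \<inter> M0 = {}"
  shows "M0 \<notin> answer_sets X (insert (PRule A B (Pos ` C \<union> Neg ` F \<union> Pos ` G)) P)"
proof
  assume "M0 \<in> answer_sets X (insert (PRule A B (Pos ` C \<union> Neg ` F \<union> Pos ` G)) P)"
  then have "pmodel M0 (gl_reduct (insert (PRule A B (Pos ` C \<union> Neg ` F \<union> Pos ` G)) P) M0)"
    by (simp add: answer_sets_def)
  then have "C \<inter> M0 = {} \<and> F \<subseteq> M0 \<and> G \<inter> M0 = {} \<longrightarrow> B \<subseteq> M0 \<longrightarrow> A \<inter> M0 \<noteq> {}"
    unfolding pmodel_gl_insert prule.sel rprime_cond by blast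
  then show False using assms by blast
qed

lemma dir2:
  fixes At :: "'a set" and Ep :: "'a lit set" and A B C D E F G :: "'a set"
  assumes inf: "infinite (UNIV :: 'a set)"
    and fin: "finite A" "finite B" "finite C" "finite D" "finite E" "finite F" "finite G" "finite At"
    and sub: "A \<subseteq> At" "B \<subseteq> At" "C \<subseteq> At" "D \<subseteq> At" "E \<subseteq> At" "F \<subseteq> At" "G \<subseteq> At"
    and el: "Pos ` D \<union> Neg ` E \<subseteq> Ep"
    and n: "A \<inter> B = {}" "B \<inter> C = {}" "B \<inter> G = {}" "C \<inter> F = {}" "D \<inter> F = {}" "E \<inter> G = {}" "F \<inter> G = {}"
    and taut: "tautological At Ep (mk_rule A B C D E F G)"
  shows False
proof -
  obtain p0 where p0: "p0 \<notin> At" using ex_new_if_finite[OF inf fin(8)] by blast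
  obtain p1 where p1: "p1 \<notin> insert p0 At" using ex_new_if_finite[OF inf, of "insert p0 At"] fin(8) by blast
  obtain p2 where p2: "p2 \<notin> insert p1 (insert p0 At)"
    using ex_new_if_finite[OF inf, of "insert p1 (insert p0 At)"] fin(8) by blast
  have ps: "p0 \<notin> At" "p1 \<notin> At" "p2 \<notin> At" "p0 \<noteq> p1" "p0 \<noteq> p2" "p1 \<noteq> p2" using p0 p1 p2 by auto
  define At' where "At' = insert p0 (insert p1 (insert p2 At))"
  have finAt': "finite At'" using fin(8) by (simp add: At'_def)
  let ?r = "mk_rule A B C D E F G"
  define r' where "r' = PRule A B (Pos ` C \<union> Neg ` F \<union> Pos ` G)"
  have use_taut: "W = answer_sets At' (insert r' (pl_red RQ))"
    if q: "is_elp (At', {}, RQ)" "\<forall>r\<in>RQ. eepos r = {} \<and> eeneg r = {}" "answer_sets At' (pl_red RQ) = W" "W \<noteq> {}"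
       "\<forall>I\<in>W. F \<subseteq> I \<and> G \<inter> I = {}" "\<forall>d\<in>D. \<exists>I\<in>W. d \<notin> I" "\<forall>e\<in>E. \<exists>I\<in>W. e \<in> I" for RQ W
  proof -
    have "W \<in> world_views (At', Ep, RQ)" using wv_plain[OF q(2-4)] .
    moreover have "world_views (elp_union (At, Ep, {?r}) (At', {}, RQ)) = world_views (elp_union (At, Ep, {}) (At', {}, RQ))"
      using taut q(1) unfolding tautological_def strongly_equiv_def by blast
    moreover have "At \<union> At' = At'" by (auto simp: At'_def)
    ultimately have "W \<in> world_views (At', Ep, insert ?r RQ)" by (simp add: elp_union_def)
    then have "W = answer_sets At' (epi_reduct (insert ?r RQ) {l\<in>Ep. \<exists>I\<in>W. \<not> lsat I l})" by (rule wv_eq)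
    also have "\<dots> = answer_sets At' (insert r' (pl_red RQ))"
      using reduct_r[OF el q(5) q(6) q(7), where A=A and B=B and C=C and R=RQ] epi_reduct_plain[OF q(2)]
      by (simp add: r'_def)
    finally show ?thesis .
  qed
  show False
  proof (cases "A \<inter> F = {}")
    case True
    define RQ where "RQ = insert (ERule {p0,p1,p2} {} {} {} {}) ((\<lambda>x. ERule {x} {p0} {} {} {}) ` (B \<union> F) \<union>
     (\<lambda>x. ERule {x} {p1} {} {} {}) ` (E \<union> F) \<union> (\<lambda>x. ERule {x} {p2} {} {} {}) ` F)"
    define W where "W = {insert p0 (B \<union> F), insert p1 (E \<union> F), insert p2 F}"
    have elp: "is_elp (At', {}, RQ)" using finAt' fin sub
      by (auto simp: is_elp_def RQ_def erule_atoms_def erule_elits_def At'_def)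
    have pl: "\<forall>r\<in>RQ. eepos r = {} \<and> eeneg r = {}" by (simp add: RQ_def ball_Un)
    have as: "answer_sets At' (pl_red RQ) = W" unfolding RQ_def W_def
      by (rule as1) (use ps sub in \<open>auto simp: At'_def\<close>)
    have W1: "\<forall>I\<in>W. F \<subseteq> I \<and> G \<inter> I = {}" using n ps sub by (auto simp: W_def)
    have W2: "\<forall>d\<in>D. \<exists>I\<in>W. d \<notin> I" using n ps sub by (auto simp: W_def)
    have W3: "\<forall>e\<in>E. \<exists>I\<in>W. e \<in> I" by (auto simp: W_def)
    have "W = answer_sets At' (insert r' (pl_red RQ))"
      using use_taut[OF elp pl as _ W1 W2 W3] by (simp add: W_def)
    moreover have "insert p0 (B \<union> F) \<in> W" by (simp add: W_def)
    moreover have "insert p0 (B \<union> F) \<notin> answer_sets At' (insert r' (pl_red RQ))"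
      unfolding r'_def by (rule m0_not_as) (use n ps sub True in auto)
    ultimately show False by blast
  next
    case False
    then obtain f0 where f0: "f0 \<in> A \<inter> F" by blast
    define RQ where "RQ = prog2 p0 p1 p2 (B \<union> (F - A)) (E \<union> F) F (A \<inter> F) f0"
    define W where "W = {insert p1 (E \<union> F), insert p2 F}"
    have elp: "is_elp (At', {}, RQ)" using finAt' fin sub f0
      by (auto simp: is_elp_def RQ_def prog2_def erule_atoms_def erule_elits_def At'_def)
    have pl: "\<forall>r\<in>RQ. eepos r = {} \<and> eeneg r = {}" by (simp add: RQ_def prog2_def ball_Un)
    have as: "answer_sets At' (pl_red RQ) = W" unfolding RQ_def W_def
      by (rule as2) (use ps sub f0 n in \<open>auto simp: At'_def\<close>)
    have W1: "\<forall>I\<in>W. F \<subseteq> I \<and> G \<inter> I = {}" using n ps sub by (auto simp: W_def)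
    have W2: "\<forall>d\<in>D. \<exists>I\<in>W. d \<notin> I" using n ps sub by (auto simp: W_def)
    have W3: "\<forall>e\<in>E. \<exists>I\<in>W. e \<in> I" by (auto simp: W_def)
    have "W = answer_sets At' (insert r' (pl_red RQ))"
      using use_taut[OF elp pl as _ W1 W2 W3] by (simp add: W_def)
    moreover have "insert p0 ((B \<union> (F - A)) \<union> (A \<inter> F)) \<in> answer_sets At' (insert r' (pl_red RQ))"
      unfolding r'_def RQ_def by (rule m0_as2) (use n ps sub f0 in \<open>auto simp: At'_def\<close>)
    moreover have "insert p0 ((B \<union> (F - A)) \<union> (A \<inter> F)) \<notin> W" using ps sub by (auto simp: W_def)
    ultimately show False by blast
  qed
qed


theorem theorem4:
  fixes At :: "'a set" and Ep :: "'a lit set" and A B C D E F G :: "'a set"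
  assumes "infinite (UNIV :: 'a set)"
    and "finite A" "finite B" "finite C" "finite D" "finite E" "finite F" "finite G"
    and "finite At" "finite Ep"
    and "erule_atoms (mk_rule A B C D E F G) \<subseteq> At"
    and "erule_elits (mk_rule A B C D E F G) \<subseteq> Ep"
  shows "tautological At Ep (mk_rule A B C D E F G) \<longleftrightarrow>
           (A \<inter> B \<noteq> {} \<or> B \<inter> (C \<union> G) \<noteq> {} \<or> C \<inter> F \<noteq> {} \<or>
            D \<inter> F \<noteq> {} \<or> E \<inter> G \<noteq> {} \<or> F \<inter> G \<noteq> {})"
proof
  assume taut: "tautological At Ep (mk_rule A B C D E F G)"
  have at: "A \<union> B \<union> C \<union> D \<union> E \<union> F \<union> G \<subseteq> At"
    using assms(11) by (auto simp: erule_atoms_def mk_rule_def image_Un image_image)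
  have el: "Pos ` D \<union> Neg ` E \<subseteq> Ep"
    using assms(12) by (auto simp: erule_elits_def mk_rule_def)
  show "A \<inter> B \<noteq> {} \<or> B \<inter> (C \<union> G) \<noteq> {} \<or> C \<inter> F \<noteq> {} \<or>
            D \<inter> F \<noteq> {} \<or> E \<inter> G \<noteq> {} \<or> F \<inter> G \<noteq> {}"
  proof (rule ccontr)
    assume "\<not> ?thesis"
    then have n: "A \<inter> B = {}" "B \<inter> C = {}" "B \<inter> G = {}" "C \<inter> F = {}" "D \<inter> F = {}" "E \<inter> G = {}" "F \<inter> G = {}"
      by auto
    show False
      by (rule dir2[OF assms(1-9) _ _ _ _ _ _ _ el n taut]) (use at in auto)
  qed
next
  assume "A \<inter> B \<noteq> {} \<or> B \<inter> (C \<union> G) \<noteq> {} \<or> C \<inter> F \<noteq> {} \<or>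
            D \<inter> F \<noteq> {} \<or> E \<inter> G \<noteq> {} \<or> F \<inter> G \<noteq> {}"
  then show "tautological At Ep (mk_rule A B C D E F G)" by (rule dir1)
qed

end
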